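(* Let $S$ be a finite set with $n\ge1$ elements and $p:2^{S}\to\mathbb{Z}\cup\{-\infty\}$ a set-function with $p(\emptyset)=0$ and $p(S)$ finite. Call an integer $\mu$ good if $\mu|X|\ge p(X)$ for every $X\subseteq S$, and bad otherwise; let $\mu_{\min}$ be the smallest good integer (equivalently, $\max\{\lceil p(X)/|X|\rceil:\emptyset\ne X\subseteq S\}$). Consider the following procedure. Let $\mu_0=\lceil p(S)/|S|\rceil-1$ (which is bad) and let $X_0$ be any set maximizing $p(X)-\mu_0|X|$ over $X\subseteq S$. For $j=1,2,\dots$, given $X_{j-1}$, let $\mu_j=\lceil p(X_{j-1})/|X_{j-1}|\rceil$; if $\mu_j$ is good, stop and output $\mu_j$; otherwise let $X_j$ be any set maximizing $p(X)-\mu_j|X|$ over $X\subseteq S$ (so $X_j\neq\emptyset$) and continue. Then the procedure stops, and if $h$ is the first index for which $\mu_h$ is good, then $\mu_h=\mu_{\min}$ and $h\le n$. *)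

theory Defs
  imports Complex_Main "HOL-Library.Extended_Real"
begin

text \<open>Set functions p : 2^S -> Z \<union> {-\<infinity>} are modelled as 'a set => ereal.\<close>

definition good :: "('a set \<Rightarrow> ereal) \<Rightarrow> 'a set \<Rightarrow> int \<Rightarrow> bool" where
  "good p S \<mu> \<longleftrightarrow> (\<forall>X. X \<subseteq> S \<longrightarrow> p X \<le> ereal (real_of_int \<mu> * real (card X)))"

definition mu_min :: "('a set \<Rightarrow> ereal) \<Rightarrow> 'a set \<Rightarrow> int" where
  "mu_min p S = (LEAST \<mu>::int. good p S \<mu>)"

definition maximizer :: "('a set \<Rightarrow> ereal) \<Rightarrow> 'a set \<Rightarrow> int \<Rightarrow> 'a set \<Rightarrow> bool" where
  "maximizer p S \<mu> X \<longleftrightarrow> X \<subseteq> S \<and>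
     (\<forall>Y. Y \<subseteq> S \<longrightarrow> p Y - ereal (real_of_int \<mu> * real (card Y))
                        \<le> p X - ereal (real_of_int \<mu> * real (card X)))"

definition ceil_ratio :: "('a set \<Rightarrow> ereal) \<Rightarrow> 'a set \<Rightarrow> int" where
  "ceil_ratio p X = \<lceil>real_of_ereal (p X) / real (card X)\<rceil>"

end

theory Submission
  imports Defs
begin

lemma bad_max:
  assumes fin: "finite S"
    and intval: "\<forall>Y. Y \<subseteq> S \<longrightarrow> p Y = -\<infinity> \<or> (\<exists>k::int. p Y = ereal (real_of_int k))"
    and p_empty: "p {} = 0"
    and bad: "\<not> good p S mu" and mx: "maximizer p S mu X"
  shows "X \<noteq> {} \<and> card X > 0 \<and> (\<exists>k::int. p X = ereal (real_of_int k) \<and> real_of_int k > real_of_int mu * real (card X))"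
proof -
  from bad obtain Y where Y: "Y \<subseteq> S" "p Y > ereal (real_of_int mu * real (card Y))"
    unfolding good_def by (auto simp: not_le)
  have XS: "X \<subseteq> S" using mx unfolding maximizer_def by auto
  have le: "p Y - ereal (real_of_int mu * real (card Y)) \<le> p X - ereal (real_of_int mu * real (card X))"
    using mx Y(1) unfolding maximizer_def by auto
  have pos: "p Y - ereal (real_of_int mu * real (card Y)) > 0"
    using Y(2) by (simp add: ereal_less_minus_iff ereal_minus_less_iff)
  have "p X - ereal (real_of_int mu * real (card X)) > 0" using le pos by simp
  hence gt: "p X > ereal (real_of_int mu * real (card X))"
    by (simp add: ereal_less_minus_iff ereal_minus_less_iff)
  hence "p X \<noteq> -\<infinity>" by auto
  with intval XS obtain k :: int where k: "p X = ereal (real_of_int k)" by blast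
  with gt have kk: "real_of_int k > real_of_int mu * real (card X)" by simp
  have "X \<noteq> {}"
  proof
    assume "X = {}" thus False using gt p_empty by (simp add: zero_ereal_def)
  qed
  moreover have "finite X" using XS fin finite_subset by blast
  ultimately show ?thesis using k kk by auto
qed

lemma ceil_gt:
  assumes "real_of_int k > real_of_int mu * real c" "c > 0"
  shows "\<lceil>real_of_int k / real c\<rceil> > mu"
proof -
  have "real_of_int k / real c > real_of_int mu" using assms by (simp add: field_simps)
  hence "real_of_int \<lceil>real_of_int k / real c\<rceil> > real_of_int mu"
    using le_of_int_ceiling less_le_trans by blast
  thus ?thesis by simp
qed

lemma ceil_le_good:
  assumes "good p S m" "X \<subseteq> S" "p X = ereal (real_of_int k)" "card X > 0"
  shows "ceil_ratio p X \<le> m"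
proof -
  have "ereal (real_of_int k) \<le> ereal (real_of_int m * real (card X))"
    using assms unfolding good_def by metis
  hence "real_of_int k \<le> real_of_int m * real (card X)" by simp
  hence "real_of_int k / real (card X) \<le> real_of_int m" using assms(4) by (simp add: field_simps)
  thus ?thesis unfolding ceil_ratio_def using assms(3) by (simp add: ceiling_le)
qed

lemma size_dec:
  assumes fin: "finite S"
    and intval: "\<forall>Y. Y \<subseteq> S \<longrightarrow> p Y = -\<infinity> \<or> (\<exists>k::int. p Y = ereal (real_of_int k))"
    and p_empty: "p {} = 0"
    and bad: "\<not> good p S mu" and mx: "maximizer p S mu X"
    and mu': "mu' = ceil_ratio p X"
    and bad': "\<not> good p S mu'" and mx': "maximizer p S mu' X'"
  shows "card X' < card X"
proof -
  obtain k where k: "p X = ereal (real_of_int k)" "real_of_int k > real_of_int mu * real (card X)"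
    and c: "card X > 0"
    using bad_max[OF fin intval p_empty bad mx] by blast
  obtain k' where k': "p X' = ereal (real_of_int k')" "real_of_int k' > real_of_int mu' * real (card X')"
    using bad_max[OF fin intval p_empty bad' mx'] by blast
  have X'S: "X' \<subseteq> S" using mx' unfolding maximizer_def by auto
  have "p X' - ereal (real_of_int mu * real (card X')) \<le> p X - ereal (real_of_int mu * real (card X))"
    using mx X'S unfolding maximizer_def by auto
  hence A: "real_of_int k' - real_of_int mu * real (card X') \<le> real_of_int k - real_of_int mu * real (card X)"
    using k k' by simp
  have "real_of_int k / real (card X) \<le> real_of_int mu'"
    unfolding mu' ceil_ratio_def k by simp
  hence B: "real_of_int k \<le> real_of_int mu' * real (card X)" using c by (simp add: field_simps)
  have gt: "mu' > mu" unfolding mu' ceil_ratio_def k using ceil_gt[OF k(2) c] by simp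
  have "(real_of_int mu' - real_of_int mu) * (real (card X') - real (card X)) < 0"
    using A B k'(2) by (simp add: algebra_simps)
  moreover have "real_of_int mu' - real_of_int mu > 0" using gt by simp
  ultimately have "real (card X') - real (card X) < 0"
    by (simp add: mult_less_0_iff)
  thus ?thesis by simp
qed

theorem theorem2p11:
  fixes S :: "'a set" and p :: "'a set \<Rightarrow> ereal"
    and X :: "nat \<Rightarrow> 'a set" and mu :: "nat \<Rightarrow> int"
  assumes fin: "finite S" and ne: "card S \<ge> 1"
    and intval: "\<forall>Y. Y \<subseteq> S \<longrightarrow> p Y = -\<infinity> \<or> (\<exists>k::int. p Y = ereal (real_of_int k))"
    and p_empty: "p {} = 0"
    and p_S: "p S \<noteq> -\<infinity>"
    and mu0: "mu 0 = ceil_ratio p S - 1"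
    and X0: "maximizer p S (mu 0) (X 0)"
    and muj: "\<forall>j\<ge>1. mu j = ceil_ratio p (X (j - 1))"
    and Xj: "\<forall>j\<ge>1. (\<forall>i\<in>{1..j}. \<not> good p S (mu i)) \<longrightarrow> maximizer p S (mu j) (X j)"
  shows "\<exists>h. 1 \<le> h \<and> h \<le> card S \<and> good p S (mu h)
             \<and> (\<forall>j\<in>{1..<h}. \<not> good p S (mu j)) \<and> mu h = mu_min p S"
proof -
  define B where "B j \<longleftrightarrow> (\<forall>i\<in>{1..j}. \<not> good p S (mu i))" for j
  have bad0: "\<not> good p S (mu 0)"
  proof
    assume g: "good p S (mu 0)"
    obtain k :: int where k: "p S = ereal (real_of_int k)" using intval p_S by blast
    have cS: "card S > 0" using ne by simp
    have "real_of_int k \<le> real_of_int (mu 0) * real (card S)"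
      using g k unfolding good_def by (metis order_refl ereal_less_eq(3))
    hence "real_of_int k / real (card S) \<le> real_of_int (mu 0)" using cS by (simp add: field_simps)
    hence "ceil_ratio p S \<le> mu 0" unfolding ceil_ratio_def k by (simp add: ceiling_le)
    thus False using mu0 by simp
  qed
  have a: "maximizer p S (mu j) (X j) \<and> \<not> good p S (mu j)" if "B j" for j
  proof (cases "j = 0")
    case True thus ?thesis using X0 bad0 by simp
  next
    case False thus ?thesis using Xj that unfolding B_def by auto
  qed
  have b: "card (X j) + j \<le> card S" if "B j" for j
    using that
  proof (induction j)
    case 0 thus ?case using X0 fin unfolding maximizer_def by (simp add: card_mono)
  next
    case (Suc j)
    have Bj: "B j" using Suc.prems unfolding B_def by auto
    have "card (X (Suc j)) < card (X j)"
      using size_dec[OF fin intval p_empty, of "mu j" "X j" "mu (Suc j)" "X (Suc j)"]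
        a[OF Bj] a[OF Suc.prems] muj by auto
    thus ?case using Suc.IH[OF Bj] by simp
  qed
  have c: "j < card S" if "B j" for j
    using b[OF that] bad_max[OF fin intval p_empty, of "mu j" "X j"] a[OF that] by auto
  have "\<not> B (card S)" using c by blast
  then obtain i where i: "i \<in> {1..card S}" "good p S (mu i)" unfolding B_def by auto
  define h where "h = (LEAST i. 1 \<le> i \<and> good p S (mu i))"
  have h: "1 \<le> h \<and> good p S (mu h)" unfolding h_def
    by (rule LeastI[of _ i]) (use i in auto)
  have hle: "h \<le> i" unfolding h_def by (rule Least_le) (use i in auto)
  have before: "\<forall>j\<in>{1..<h}. \<not> good p S (mu j)"
    using not_less_Least[where P = "\<lambda>i. 1 \<le> i \<and> good p S (mu i)"] unfolding h_def[symmetric]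
    by auto
  have Bh: "B (h - 1)" using before h unfolding B_def by auto
  obtain k where k: "p (X (h-1)) = ereal (real_of_int k)" and cpos: "card (X (h-1)) > 0"
    using bad_max[OF fin intval p_empty, of "mu (h-1)" "X (h-1)"] a[OF Bh] by blast
  have XS: "X (h-1) \<subseteq> S" using a[OF Bh] unfolding maximizer_def by auto
  have muh: "mu h = ceil_ratio p (X (h-1))" using muj h by auto
  have "mu h = mu_min p S" unfolding mu_min_def
  proof (rule Least_equality[symmetric])
    show "good p S (mu h)" using h by simp
    fix m assume "good p S m"
    thus "mu h \<le> m" using ceil_le_good[of p S m "X (h-1)" k] XS k cpos muh by simp
  qed
  thus ?thesis using h hle i before by (intro exI[of _ h]) auto
qed

end
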